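(* Let $m\in\mathbb{N}$ and let $\{\{a_1,\dots,a_m\},\{b_1,\dots,b_m\}\}$ be an $m+m$ sum-and-distance system (non-inclusive or inclusive). Then \[\sum_{j=1}^m(a_j^2+b_j^2)=\begin{cases}\frac{1}{3!}(2m)\big((2m)^4-1\big) & \text{in the non-inclusive case},\\[2pt] \frac{1}{4!}(2m+1)\big((2m+1)^4-1\big) & \text{in the inclusive case}.\end{cases}\]
   Context: For positive integers $a_1<\dots<a_m$, $b_1<\dots<b_m$, the pair $\{\{a_1,\dots,a_m\},\{b_1,\dots,b_m\}\}$ is an $m+m$ non-inclusive sum-and-distance system if $\{a_j+b_k,\ |a_j-b_k| : j,k\in\{1,\dots,m\}\}=\{1,3,5,\dots,4m^2-1\}$, and an $m+m$ inclusive sum-and-distance system if $\{a_j,\ b_k,\ a_j+b_k,\ |a_j-b_k| : j,k\in\{1,\dots,m\}\}=\{1,2,\dots,2m(m+1)\}$. *)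

theory Defs
  imports Complex_Main
begin

definition mm_pair :: "nat \<Rightarrow> int set \<Rightarrow> int set \<Rightarrow> bool" where
  "mm_pair m A B \<longleftrightarrow> finite A \<and> finite B \<and> card A = m \<and> card B = m
     \<and> (\<forall>a\<in>A. a > 0) \<and> (\<forall>b\<in>B. b > 0)"

definition noninclusive_sds :: "nat \<Rightarrow> int set \<Rightarrow> int set \<Rightarrow> bool" where
  "noninclusive_sds m A B \<longleftrightarrow> mm_pair m A B \<and>
     {a + b | a b. a \<in> A \<and> b \<in> B} \<union> {\<bar>a - b\<bar> | a b. a \<in> A \<and> b \<in> B}
       = {k. odd k \<and> 1 \<le> k \<and> k \<le> 4 * int m ^ 2 - 1}"

definition inclusive_sds :: "nat \<Rightarrow> int set \<Rightarrow> int set \<Rightarrow> bool" where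
  "inclusive_sds m A B \<longleftrightarrow> mm_pair m A B \<and>
     A \<union> B \<union> {a + b | a b. a \<in> A \<and> b \<in> B} \<union> {\<bar>a - b\<bar> | a b. a \<in> A \<and> b \<in> B}
       = {1 .. 2 * int m * (int m + 1)}"

end

theory Submission
  imports Defs
begin

lemma sum_Un_card:
  assumes "finite X" "finite Y" "card (X \<union> Y) = card X + card Y"
  shows "sum g (X \<union> Y) = sum g X + sum g Y"
proof -
  have "card X + card Y = card (X \<union> Y) + card (X \<inter> Y)"
    using card_Un_Int[OF assms(1,2)] .
  then have "card (X \<inter> Y) = 0" using assms(3) by simp
  then have "X \<inter> Y = {}" using assms(1) by simp
  then show ?thesis using sum.union_disjoint[OF assms(1,2)] by simp
qed

lemma sums_img: "{a + b | a b. a \<in> A \<and> b \<in> B} = (\<lambda>(a,b). a + b) ` (A \<times> B)"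
  by auto
lemma diffs_img: "{\<bar>a - b\<bar> | a b. a \<in> A \<and> b \<in> B} = (\<lambda>(a,b). \<bar>a - b\<bar>) ` (A \<times> B)"
  by auto

lemma pair_card:
  fixes A B :: "int set"
  assumes "finite A" "finite B"
  shows "card {a + b | a b. a \<in> A \<and> b \<in> B} \<le> card A * card B"
    "card {\<bar>a - b\<bar> | a b. a \<in> A \<and> b \<in> B} \<le> card A * card B"
  unfolding sums_img diffs_img
  using card_image_le[of "A \<times> B"] assms by (auto simp: card_cartesian_product)

lemma pair_sum:
  fixes A B :: "int set"
  assumes "finite A" "finite B"
    "card {a + b | a b. a \<in> A \<and> b \<in> B} = card A * card B"
    "card {\<bar>a - b\<bar> | a b. a \<in> A \<and> b \<in> B} = card A * card B"
  shows "(\<Sum>k\<in>{a + b | a b. a \<in> A \<and> b \<in> B}. k^2) + (\<Sum>k\<in>{\<bar>a - b\<bar> | a b. a \<in> A \<and> b \<in> B}. k^2)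
     = 2 * (int (card B) * (\<Sum>a\<in>A. a^2) + int (card A) * (\<Sum>b\<in>B. b^2))"
proof -
  have fin: "finite (A \<times> B)" using assms by simp
  have i1: "inj_on (\<lambda>(a,b). a + b) (A \<times> B)"
    apply (rule eq_card_imp_inj_on[OF fin])
    using assms(3) unfolding sums_img by (simp add: card_cartesian_product)
  have i2: "inj_on (\<lambda>(a,b). \<bar>a - b\<bar>) (A \<times> B)"
    apply (rule eq_card_imp_inj_on[OF fin])
    using assms(4) unfolding diffs_img by (simp add: card_cartesian_product)
  have "(\<Sum>k\<in>{a + b | a b. a \<in> A \<and> b \<in> B}. k^2) + (\<Sum>k\<in>{\<bar>a - b\<bar> | a b. a \<in> A \<and> b \<in> B}. k^2)
     = (\<Sum>p\<in>A \<times> B. (fst p + snd p)^2) + (\<Sum>p\<in>A \<times> B. \<bar>fst p - snd p\<bar>^2)"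
    unfolding sums_img diffs_img
    using sum.reindex[OF i1, of power2] sum.reindex[OF i2, of power2]
    by (simp add: o_def case_prod_beta')
  also have "\<dots> = (\<Sum>p\<in>A \<times> B. 2 * (fst p)^2 + 2 * (snd p)^2)"
    by (simp add: sum.distrib[symmetric] power2_eq_square algebra_simps)
  also have "\<dots> = (\<Sum>a\<in>A. \<Sum>b\<in>B. 2 * a^2 + 2 * b^2)"
    by (simp add: sum.cartesian_product case_prod_beta')
  also have "\<dots> = 2 * (int (card B) * (\<Sum>a\<in>A. a^2) + int (card A) * (\<Sum>b\<in>B. b^2))"
    by (simp add: sum.distrib sum_distrib_left sum_distrib_right algebra_simps
        sum.swap[of "\<lambda>a b. b^2" A B])
  finally show ?thesis .
qed

lemma sq_sum: "6 * (\<Sum>k\<in>{1..int n}. k^2) = int n * (int n + 1) * (2 * int n + 1)"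
proof (induction n)
  case 0 then show ?case by simp
next
  case (Suc n)
  have "{1..int (Suc n)} = insert (int n + 1) {1..int n}" by auto
  then show ?case using Suc by (simp add: algebra_simps power2_eq_square)
qed

lemma odd_sq_sum: "3 * (\<Sum>i\<in>{1..int n}. (2*i-1)^2) = int n * (2 * int n - 1) * (2 * int n + 1)"
proof (induction n)
  case 0 then show ?case by simp
next
  case (Suc n)
  have "{1..int (Suc n)} = insert (int n + 1) {1..int n}" by auto
  then show ?case using Suc by (simp add: algebra_simps power2_eq_square)
qed

lemma odd_set: "{k::int. odd k \<and> 1 \<le> k \<and> k \<le> 4 * int m ^ 2 - 1} = (\<lambda>i. 2*i-1) ` {1..2 * int m^2}"
proof (rule set_eqI, rule iffI)
  fix k assume "k \<in> {k::int. odd k \<and> 1 \<le> k \<and> k \<le> 4 * int m ^ 2 - 1}"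
  then have "odd k" "1 \<le> k" "k \<le> 4 * int m ^ 2 - 1" by auto
  then obtain j where "k = 2*j+1" by (meson oddE)
  then show "k \<in> (\<lambda>i. 2*i-1) ` {1..2 * int m^2}"
    using \<open>1 \<le> k\<close> \<open>k \<le> 4 * int m ^ 2 - 1\<close>
    by (intro image_eqI[where x="j+1"]) auto
qed auto

theorem theorem6:
  fixes m :: nat and A B :: "int set"
  shows "(noninclusive_sds m A B \<longrightarrow>
            (of_int :: int \<Rightarrow> rat) ((\<Sum>a\<in>A. a ^ 2) + (\<Sum>b\<in>B. b ^ 2))
              = (1 / 6) * (2 * of_nat m) * ((2 * of_nat m) ^ 4 - 1))
       \<and> (inclusive_sds m A B \<longrightarrow>
            (of_int :: int \<Rightarrow> rat) ((\<Sum>a\<in>A. a ^ 2) + (\<Sum>b\<in>B. b ^ 2))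
              = (1 / 24) * (2 * of_nat m + 1) * ((2 * of_nat m + 1) ^ 4 - 1))"
proof (intro conjI impI)
  define P where "P = {a + b | a b. a \<in> A \<and> b \<in> B}"
  define Q where "Q = {\<bar>a - b\<bar> | a b. a \<in> A \<and> b \<in> B}"
  define T where "T = (\<Sum>a\<in>A. a ^ 2) + (\<Sum>b\<in>B. b ^ 2)"
  {
    assume h: "noninclusive_sds m A B"
    then have mm: "finite A" "finite B" "card A = m" "card B = m" and
      S: "P \<union> Q = {k::int. odd k \<and> 1 \<le> k \<and> k \<le> 4 * int m ^ 2 - 1}"
      unfolding noninclusive_sds_def mm_pair_def P_def Q_def by auto
    have inj: "inj_on (\<lambda>i::int. 2*i-1) {1..2 * int m^2}" by (auto simp: inj_on_def)
    have cS: "card (P \<union> Q) = 2 * m^2"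
      unfolding S odd_set card_image[OF inj] by (simp add: nat_mult_distrib nat_power_eq)
    have fP: "finite P" "finite Q" unfolding P_def Q_def sums_img diffs_img using mm by auto
    have cP: "card P \<le> m * m" "card Q \<le> m * m"
      unfolding P_def Q_def using pair_card[OF mm(1,2)] mm by auto
    have cu: "card (P \<union> Q) \<le> card P + card Q" by (rule card_Un_le)
    have eqs: "card P = m * m" "card Q = m * m" "card (P \<union> Q) = card P + card Q"
      using cP cu cS by (auto simp: power2_eq_square)
    have ps: "(\<Sum>k\<in>P. k^2) + (\<Sum>k\<in>Q. k^2) = 2 * (int m * T)"
      using pair_sum[OF mm(1,2)] eqs mm unfolding P_def Q_def T_def
      by (simp add: algebra_simps)
    have "(\<Sum>k\<in>P \<union> Q. k^2) = 2 * (int m * T)"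
      using sum_Un_card[OF fP eqs(3), of "\<lambda>k. k^2"] ps by simp
    moreover have "3 * (\<Sum>k\<in>P \<union> Q. k^2) = int (2*m^2) * (2 * int (2*m^2) - 1) * (2 * int (2*m^2) + 1)"
      unfolding S odd_set sum.reindex[OF inj] using odd_sq_sum[of "2*m^2"] by (simp add: o_def)
    ultimately have key: "int m * (3 * T) = int m * (int m * (16 * int m^4 - 1))"
      by (simp add: algebra_simps power2_eq_square power4_eq_xxxx)
    show "(of_int :: int \<Rightarrow> rat) ((\<Sum>a\<in>A. a ^ 2) + (\<Sum>b\<in>B. b ^ 2))
              = (1 / 6) * (2 * of_nat m) * ((2 * of_nat m) ^ 4 - 1)"
    proof (cases "m = 0")
      case True
      then have "A = {}" "B = {}" using mm by auto
      then show ?thesis using True by simp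
    next
      case False
      then have "3 * T = int m * (16 * int m^4 - 1)" using key by simp
      then have "(of_int (3 * T) :: rat) = of_int (int m * (16 * int m^4 - 1))" by simp
      then have "3 * (of_int T :: rat) = of_nat m * (16 * of_nat m^4 - 1)" by simp
      then show ?thesis unfolding T_def[symmetric] by (simp add: field_simps)
    qed
  }
  {
    assume h: "inclusive_sds m A B"
    then have mm: "finite A" "finite B" "card A = m" "card B = m" and
      S: "A \<union> B \<union> P \<union> Q = {1 .. 2 * int m * (int m + 1)}"
      unfolding inclusive_sds_def mm_pair_def P_def Q_def by auto
    define N where "N = 2 * m * (m + 1)"
    have SN: "A \<union> B \<union> P \<union> Q = {1 .. int N}" unfolding S N_def by (simp add: algebra_simps)
    have cS: "card (A \<union> B \<union> P \<union> Q) = N" unfolding SN by simp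
    have fP: "finite P" "finite Q" unfolding P_def Q_def sums_img diffs_img using mm by auto
    have cP: "card P \<le> m * m" "card Q \<le> m * m"
      unfolding P_def Q_def using pair_card[OF mm(1,2)] mm by auto
    have c1: "card (A \<union> B \<union> P \<union> Q) \<le> card (A \<union> B \<union> P) + card Q" by (rule card_Un_le)
    have c2: "card (A \<union> B \<union> P) \<le> card (A \<union> B) + card P" by (rule card_Un_le)
    have c3: "card (A \<union> B) \<le> card A + card B" by (rule card_Un_le)
    have eqs: "card P = m * m" "card Q = m * m"
      "card (A \<union> B \<union> P \<union> Q) = card (A \<union> B \<union> P) + card Q"
      "card (A \<union> B \<union> P) = card (A \<union> B) + card P"
      "card (A \<union> B) = card A + card B"
      using cP c1 c2 c3 cS mm unfolding N_def by (auto simp: algebra_simps)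
    have ps: "(\<Sum>k\<in>P. k^2) + (\<Sum>k\<in>Q. k^2) = 2 * (int m * T)"
      using pair_sum[OF mm(1,2)] eqs mm unfolding P_def Q_def T_def
      by (simp add: algebra_simps)
    have "(\<Sum>k\<in>A \<union> B \<union> P \<union> Q. k^2) = T + 2 * (int m * T)"
      using sum_Un_card[OF _ fP(2) eqs(3), of "\<lambda>k. k^2"] sum_Un_card[OF _ fP(1) eqs(4), of "\<lambda>k. k^2"]
        sum_Un_card[OF mm(1,2) eqs(5), of "\<lambda>k. k^2"] ps mm fP unfolding T_def by simp
    moreover have "6 * (\<Sum>k\<in>A \<union> B \<union> P \<union> Q. k^2) = int N * (int N + 1) * (2 * int N + 1)"
      unfolding SN by (rule sq_sum)
    ultimately have key: "6 * ((2 * int m + 1) * T) = int N * (int N + 1) * (2 * int N + 1)"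
      by (simp add: algebra_simps)
    have "(2 * int m + 1) * (3 * T) = (2 * int m + 1) * (int m * (int m + 1) * (2 * int m^2 + 2 * int m + 1) * (2 * int m + 1))"
      using key unfolding N_def by (simp add: algebra_simps power2_eq_square)
    then have "3 * T = int m * (int m + 1) * (2 * int m^2 + 2 * int m + 1) * (2 * int m + 1)"
      by (smt (verit) mult_cancel_left)
    then have "(of_int (3 * T) :: rat) = of_int (int m * (int m + 1) * (2 * int m^2 + 2 * int m + 1) * (2 * int m + 1))" by simp
    then have "3 * (of_int T :: rat) = of_nat m * (of_nat m + 1) * (2 * of_nat m^2 + 2 * of_nat m + 1) * (2 * of_nat m + 1)" by simp
    then show "(of_int :: int \<Rightarrow> rat) ((\<Sum>a\<in>A. a ^ 2) + (\<Sum>b\<in>B. b ^ 2))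
              = (1 / 24) * (2 * of_nat m + 1) * ((2 * of_nat m + 1) ^ 4 - 1)"
      unfolding T_def[symmetric] by (simp add: field_simps power2_eq_square power4_eq_xxxx)
  }
qed

end
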